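(* There exist an environment $E$ and a total preorder $\succeq$ on $\Pi^E$ such that $\succeq\in\mathrm{Ord}_{\mathrm{RM}}(E)$ but $\succeq\notin\mathrm{Ord}_{\mathrm{ONMR}}(E)$.
   Context: An environment is a tuple $E=(\mathcal S,\mathcal A,\mathcal T,\mathcal I)$ where $\mathcal S,\mathcal A$ are finite nonempty sets, $\mathcal T:\mathcal S\times\mathcal A\to\Delta(\mathcal S)$ and $\mathcal I\in\Delta(\mathcal S)$. A policy is a map $\pi:\mathcal S\to\Delta(\mathcal A)$ (stationary, possibly stochastic); $\Pi^E$ denotes the set of all policies. A trajectory $\xi=(s_0,a_0,s_1,a_1,\dots)$ is generated under $\pi$ by $s_0\sim\mathcal I$, $a_t\sim\pi(s_t)$, $s_{t+1}\sim\mathcal T(s_t,a_t)$; $\mathbb E^\pi_\xi$ denotes expectation under this distribution. An objective-specification formalism $X$ assigns to each environment $E$ a set of objective specifications, each inducing a total preorder $\succeq$ on $\Pi^E$; $\mathrm{Ord}_X(E)$ is the set of total preorders so induced. A specification defining a scalar $J:\Pi^E\to\mathbb R$ induces $\pi_1\succeq\pi_2\iff J(\pi_1)\ge J(\pi_2)$. RM (reward machines): specification $(U,u_0,\delta_U,\delta_{\mathcal R},\gamma)$ with $U$ a finite set, $u_0\in U$, $\delta_U:U\times\mathcal S\times\mathcal A\times\mathcal S\to U$, $\delta_{\mathcal R}:U\times U\to(\mathcal S\times\mathcal A\times\mathcal S\to\mathbb R)$, $\gamma\in[0,1)$; along a trajectory $u_{t+1}=\delta_U(u_t,s_t,a_t,s_{t+1})$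 and $J(\pi)=\mathbb E^\pi_\xi[\sum_{t=0}^\infty\gamma^t\,\delta_{\mathcal R}(u_t,u_{t+1})(s_t,a_t,s_{t+1})]$. ONMR: specification $(\mathcal R,f,\gamma)$ with $\mathcal R:\mathcal S\times\mathcal A\times\mathcal S\to\mathbb R$, $f:\mathbb R\to\mathbb R$, $\gamma\in[0,1)$; $J(\pi)=f\big(\mathbb E^\pi_\xi[\sum_{t=0}^\infty\gamma^t\mathcal R(s_t,a_t,s_{t+1})]\big)$. *)

theory Defs
  imports "HOL-Probability.Probability"
begin

record env =
  St :: "nat set"
  Act :: "nat set"
  Trans :: "nat \<Rightarrow> nat \<Rightarrow> nat pmf"
  Init :: "nat pmf"

definition valid_env :: "env \<Rightarrow> bool" where
  "valid_env E \<longleftrightarrow> finite (St E) \<and> St E \<noteq> {} \<and> finite (Act E) \<and> Act E \<noteq> {}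
     \<and> set_pmf (Init E) \<subseteq> St E
     \<and> (\<forall>s\<in>St E. \<forall>a\<in>Act E. set_pmf (Trans E s a) \<subseteq> St E)"

definition policies :: "env \<Rightarrow> (nat \<Rightarrow> nat pmf) set" where
  "policies E = {\<pi>. \<forall>s\<in>St E. set_pmf (\<pi> s) \<subseteq> Act E}"

(* Distribution of the trajectory prefix up to time t: the list of the first t
   transitions (s_i, a_i, s_{i+1}) together with the current state s_t. *)
fun hist :: "env \<Rightarrow> (nat \<Rightarrow> nat pmf) \<Rightarrow> nat \<Rightarrow> ((nat \<times> nat \<times> nat) list \<times> nat) pmf" where
  "hist E \<pi> 0 = map_pmf (\<lambda>s. ([], s)) (Init E)"
| "hist E \<pi> (Suc t) = bind_pmf (hist E \<pi> t) (\<lambda>(h, s).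
      bind_pmf (\<pi> s) (\<lambda>a. map_pmf (\<lambda>s'. (h @ [(s, a, s')], s')) (Trans E s a)))"

definition rm_run :: "(nat \<Rightarrow> nat \<Rightarrow> nat \<Rightarrow> nat \<Rightarrow> nat) \<Rightarrow> nat \<Rightarrow> (nat \<times> nat \<times> nat) list \<Rightarrow> nat" where
  "rm_run dU u0 h = foldl (\<lambda>u (s, a, s'). dU u s a s') u0 h"

definition rm_step_reward ::
  "(nat \<Rightarrow> nat \<Rightarrow> nat \<Rightarrow> nat \<Rightarrow> nat) \<Rightarrow> (nat \<Rightarrow> nat \<Rightarrow> nat \<Rightarrow> nat \<Rightarrow> nat \<Rightarrow> real) \<Rightarrow> nat
    \<Rightarrow> (nat \<times> nat \<times> nat) list \<Rightarrow> real" where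
  "rm_step_reward dU dR u0 h =
     (let (s, a, s') = last h; u = rm_run dU u0 (butlast h) in dR u (dU u s a s') s a s')"

(* J(pi) = E[sum_t gamma^t delta_R(u_t,u_{t+1})(s_t,a_t,s_{t+1})], written as
   sum_t gamma^t E[reward at step t] (the rewards are bounded, so this equals the
   expectation of the discounted sum). *)
definition J_RM :: "env \<Rightarrow> (nat \<Rightarrow> nat \<Rightarrow> nat \<Rightarrow> nat \<Rightarrow> nat) \<Rightarrow> (nat \<Rightarrow> nat \<Rightarrow> nat \<Rightarrow> nat \<Rightarrow> nat \<Rightarrow> real)
    \<Rightarrow> nat \<Rightarrow> real \<Rightarrow> (nat \<Rightarrow> nat pmf) \<Rightarrow> real" where
  "J_RM E dU dR u0 \<gamma> \<pi> =
     (\<Sum>t. \<gamma> ^ t * measure_pmf.expectation (hist E \<pi> (Suc t)) (\<lambda>(h, s). rm_step_reward dU dR u0 h))"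

definition valid_RM :: "env \<Rightarrow> nat set \<Rightarrow> nat \<Rightarrow> (nat \<Rightarrow> nat \<Rightarrow> nat \<Rightarrow> nat \<Rightarrow> nat) \<Rightarrow> real \<Rightarrow> bool" where
  "valid_RM E U u0 dU \<gamma> \<longleftrightarrow> finite U \<and> u0 \<in> U
     \<and> (\<forall>u\<in>U. \<forall>s\<in>St E. \<forall>a\<in>Act E. \<forall>s'\<in>St E. dU u s a s' \<in> U)
     \<and> 0 \<le> \<gamma> \<and> \<gamma> < 1"

definition induced_order :: "env \<Rightarrow> ((nat \<Rightarrow> nat pmf) \<Rightarrow> real) \<Rightarrow> (nat \<Rightarrow> nat pmf) rel" where
  "induced_order E J = {(p1, p2). p1 \<in> policies E \<and> p2 \<in> policies E \<and> J p1 \<ge> J p2}"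

definition Ord_RM :: "env \<Rightarrow> (nat \<Rightarrow> nat pmf) rel set" where
  "Ord_RM E = {R. \<exists>U u0 dU dR \<gamma>. valid_RM E U u0 dU \<gamma>
                    \<and> R = induced_order E (J_RM E dU dR u0 \<gamma>)}"

definition J_ONMR :: "env \<Rightarrow> (nat \<Rightarrow> nat \<Rightarrow> nat \<Rightarrow> real) \<Rightarrow> (real \<Rightarrow> real) \<Rightarrow> real
    \<Rightarrow> (nat \<Rightarrow> nat pmf) \<Rightarrow> real" where
  "J_ONMR E Rw f \<gamma> \<pi> =
     f (\<Sum>t. \<gamma> ^ t * measure_pmf.expectation (hist E \<pi> (Suc t))
                         (\<lambda>(h, s). case last h of (s0, a, s1) \<Rightarrow> Rw s0 a s1))"

definition Ord_ONMR :: "env \<Rightarrow> (nat \<Rightarrow> nat pmf) rel set" where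
  "Ord_ONMR E = {R. \<exists>Rw f \<gamma>. 0 \<le> \<gamma> \<and> \<gamma> < 1 \<and> R = induced_order E (J_ONMR E Rw f \<gamma>)}"

end

theory Submission imports Defs begin

definition E0 :: env where
  "E0 = \<lparr>St = {0,1}, Act = {0,1}, Trans = (\<lambda>s a. return_pmf 1), Init = return_pmf 0\<rparr>"

lemma hist_snd: "map_pmf snd (hist E0 \<pi> t) = return_pmf (if t = 0 then 0 else 1)"
proof (induction t)
  case 0
  then show ?case by (simp add: E0_def map_pmf_comp)
next
  case (Suc t)
  have "map_pmf snd (hist E0 \<pi> (Suc t)) = bind_pmf (hist E0 \<pi> t) (\<lambda>_. return_pmf 1)"
    by (simp add: E0_def map_bind_pmf case_prod_beta map_pmf_comp bind_return_pmf)
  also have "\<dots> = return_pmf 1" by simp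
  finally show ?case by simp
qed

definition st :: "nat \<Rightarrow> nat" where "st t = (if t = 0 then 0 else 1)"

lemma hist_last: "map_pmf (\<lambda>(h,s). last h) (hist E0 \<pi> (Suc t)) = map_pmf (\<lambda>a. (st t, a, 1)) (\<pi> (st t))"
proof -
  have "map_pmf (\<lambda>(h,s). last h) (hist E0 \<pi> (Suc t)) = bind_pmf (hist E0 \<pi> t) (\<lambda>x. map_pmf (\<lambda>a. (snd x, a, 1)) (\<pi> (snd x)))"
    by (simp add: E0_def map_bind_pmf case_prod_beta map_pmf_comp bind_return_pmf) (simp add: map_pmf_def)
  also have "\<dots> = bind_pmf (map_pmf snd (hist E0 \<pi> t)) (\<lambda>s. map_pmf (\<lambda>a. (s, a, 1)) (\<pi> s))"
    by (simp add: bind_map_pmf)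
  also have "\<dots> = map_pmf (\<lambda>a. (st t, a, 1)) (\<pi> (st t))"
    by (simp add: hist_snd st_def bind_return_pmf)
  finally show ?thesis .
qed

definition dU :: "nat \<Rightarrow> nat \<Rightarrow> nat \<Rightarrow> nat \<Rightarrow> nat" where
  "dU u s a s' = (if u = 0 then a + 1 else u)"
definition dR :: "nat \<Rightarrow> nat \<Rightarrow> nat \<Rightarrow> nat \<Rightarrow> nat \<Rightarrow> real" where
  "dR u u' s a s' = (if u \<noteq> 0 \<and> u = a + 1 then 1 else 0)"

definition K where "K \<pi> t = map_pmf (\<lambda>(h,s). (rm_run dU 0 h, s)) (hist E0 \<pi> t)"

lemma K_step: "K \<pi> (Suc t) = bind_pmf (K \<pi> t) (\<lambda>(u,s). map_pmf (\<lambda>a. (dU u s a 1, 1)) (\<pi> s))"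
  unfolding K_def
  by (simp add: E0_def map_bind_pmf bind_map_pmf case_prod_beta map_pmf_comp bind_return_pmf rm_run_def)
     (simp add: map_pmf_def)

lemma K_Suc: "K \<pi> (Suc t) = map_pmf (\<lambda>a. (a+1, 1)) (\<pi> 0)"
proof (induction t)
  case 0
  have "K \<pi> 0 = return_pmf (0,0)" by (simp add: K_def E0_def map_pmf_comp rm_run_def)
  then show ?case by (simp add: K_step dU_def bind_return_pmf)
next
  case (Suc t)
  show ?case
    apply (subst K_step) apply (subst Suc)
    by (simp add: bind_map_pmf dU_def) (simp add: map_pmf_def)
qed

lemma rew_map: "map_pmf (\<lambda>(h,s). rm_step_reward dU dR 0 h) (hist E0 \<pi> (Suc t)) =
   bind_pmf (K \<pi> t) (\<lambda>(u,s). map_pmf (\<lambda>a. dR u (dU u s a 1) s a 1) (\<pi> s))"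
  unfolding K_def
  by (simp add: E0_def map_bind_pmf bind_map_pmf case_prod_beta map_pmf_comp bind_return_pmf rm_step_reward_def Let_def)
     (simp add: map_pmf_def)

definition b2n :: "bool \<Rightarrow> nat" where "b2n b = (if b then 0 else 1)"
definition pol :: "real \<Rightarrow> real \<Rightarrow> nat \<Rightarrow> nat pmf" where
  "pol p q = (\<lambda>s. if s = 0 then map_pmf b2n (bernoulli_pmf p) else map_pmf b2n (bernoulli_pmf q))"

lemma rew0: "map_pmf (\<lambda>(h,s). rm_step_reward dU dR 0 h) (hist E0 \<pi> (Suc 0)) = return_pmf 0"
  proof -
  have "K \<pi> 0 = return_pmf (0,0)" by (simp add: K_def E0_def map_pmf_comp rm_run_def)
  then show ?thesis by (subst rew_map) (simp add: dR_def bind_return_pmf)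
qed

lemma rewS: "map_pmf (\<lambda>(h,s). rm_step_reward dU dR 0 h) (hist E0 (pol p q) (Suc (Suc t))) =
   map_pmf (\<lambda>(b,c). if b = c then 1 else 0) (pair_pmf (bernoulli_pmf p) (bernoulli_pmf q))"
  apply (subst rew_map) apply (subst K_Suc)
  apply (simp add: bind_map_pmf pair_pmf_def map_bind_pmf pol_def dU_def dR_def b2n_def)
  apply (simp add: map_pmf_def bind_assoc_pmf bind_return_pmf b2n_def)
  apply (intro bind_pmf_cong refl)
  apply auto
  done

lemma exp_pair:
  assumes "0 \<le> p" "p \<le> 1" "0 \<le> q" "q \<le> 1"
  shows "measure_pmf.expectation (pair_pmf (bernoulli_pmf p) (bernoulli_pmf q)) (\<lambda>(b,c). if b = c then 1 else (0::real))
     = p*q + (1-p)*(1-q)"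
  apply (subst integral_measure_pmf[of "UNIV \<times> UNIV"])
  using assms by (auto simp: UNIV_bool pmf_pair)

lemma ser:
  fixes \<gamma> :: real
  assumes "0 \<le> \<gamma>" "\<gamma> < 1" "\<And>t. e t = (if t = 0 then x0 else x1)"
  shows "(\<Sum>t. \<gamma> ^ t * e t) = x0 + \<gamma> / (1 - \<gamma>) * x1"
proof -
  have eq: "(\<lambda>t. \<gamma> ^ t * e t) = (\<lambda>t. x1 * \<gamma> ^ t + (if t = 0 then x0 - x1 else 0))"
    using assms(3) by (auto simp: fun_eq_iff)
  have "(\<lambda>t. x1 * \<gamma> ^ t) sums (x1 * (1 / (1 - \<gamma>)))"
    using assms by (intro sums_mult geometric_sums) auto
  moreover have "(\<lambda>t. if t = 0 then x0 - x1 else 0) sums (x0 - x1)"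
    using sums_single[of 0 "\<lambda>_. x0 - x1"] by simp
  ultimately have "(\<lambda>t. \<gamma> ^ t * e t) sums (x1 * (1 / (1 - \<gamma>)) + (x0 - x1))"
    unfolding eq by (rule sums_add)
  then have "(\<Sum>t. \<gamma> ^ t * e t) = x1 * (1 / (1 - \<gamma>)) + (x0 - x1)" by (rule sums_unique[symmetric])
  also have "\<dots> = x0 + \<gamma> / (1 - \<gamma>) * x1" using assms by (simp add: field_simps)
  finally show ?thesis .
qed

lemma exp_map: "measure_pmf.expectation M g = measure_pmf.expectation (map_pmf g M) (\<lambda>x. x :: real)"
  by simp

lemma JRM_val:
  assumes "0 \<le> p" "p \<le> 1" "0 \<le> q" "q \<le> 1"
  shows "J_RM E0 dU dR 0 (1/2) (pol p q) = p*q + (1-p)*(1-q)"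
proof -
  have "J_RM E0 dU dR 0 (1/2) (pol p q) = 0 + (1/2) / (1 - 1/2) * (p*q + (1-p)*(1-q))"
    unfolding J_RM_def
  proof (rule ser)
    fix t
    show "measure_pmf.expectation (hist E0 (pol p q) (Suc t)) (\<lambda>(h, s). rm_step_reward dU dR 0 h) =
         (if t = 0 then 0 else p * q + (1 - p) * (1 - q))"
    proof (cases t)
      case 0
      then show ?thesis by (subst exp_map) (simp only: rew0, simp)
    next
      case (Suc t')
      then show ?thesis using exp_pair[OF assms] by (subst exp_map) (simp only: rewS, simp)
    qed
  qed auto
  then show ?thesis by simp
qed

lemma JONMR_val:
  assumes "0 \<le> p" "p \<le> 1" "0 \<le> q" "q \<le> 1" "0 \<le> \<gamma>" "\<gamma> < 1"
  shows "J_ONMR E0 Rw f \<gamma> (pol p q) = f ((Rw 0 0 1 * p + Rw 0 1 1 * (1 - p)) +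
      \<gamma> / (1 - \<gamma>) * (Rw 1 0 1 * q + Rw 1 1 1 * (1 - q)))"
  unfolding J_ONMR_def
proof (rule arg_cong[where f = f], rule ser[OF assms(5,6)])
  fix t
  have "measure_pmf.expectation (hist E0 (pol p q) (Suc t)) (\<lambda>(h, s). case last h of (s0, a, s1) \<Rightarrow> Rw s0 a s1)
     = measure_pmf.expectation (map_pmf (\<lambda>(h,s). last h) (hist E0 (pol p q) (Suc t))) (\<lambda>(s0, a, s1). Rw s0 a s1)"
    by (simp only: integral_map_pmf) (simp add: case_prod_unfold)
  also have "\<dots> = measure_pmf.expectation (pol p q (st t)) (\<lambda>a. Rw (st t) a 1)"
    by (simp only: hist_last) simp
  also have "\<dots> = (if t = 0 then Rw 0 0 1 * p + Rw 0 1 1 * (1 - p) else Rw 1 0 1 * q + Rw 1 1 1 * (1 - q))"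
    using assms by (simp add: pol_def st_def b2n_def)
  finally show "measure_pmf.expectation (hist E0 (pol p q) (Suc t)) (\<lambda>(h, s). case last h of (s0, a, s1) \<Rightarrow> Rw s0 a s1)
     = (if t = 0 then Rw 0 0 1 * p + Rw 0 1 1 * (1 - p) else Rw 1 0 1 * q + Rw 1 1 1 * (1 - q))" .
qed

lemma pol_in: "pol p q \<in> policies E0"
  by (auto simp: policies_def E0_def pol_def b2n_def)

lemma notONMR: "induced_order E0 (J_RM E0 dU dR 0 (1/2)) \<notin> Ord_ONMR E0"
proof
  assume "induced_order E0 (J_RM E0 dU dR 0 (1/2)) \<in> Ord_ONMR E0"
  then obtain Rw f \<gamma> where g: "0 \<le> \<gamma>" "\<gamma> < 1"
    and R: "induced_order E0 (J_RM E0 dU dR 0 (1/2)) = induced_order E0 (J_ONMR E0 Rw f \<gamma>)"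
    unfolding Ord_ONMR_def by blast
  define B where "B = Rw 0 0 1 - Rw 0 1 1"
  define C where "C = \<gamma> / (1 - \<gamma>) * (Rw 1 0 1 - Rw 1 1 1)"
  define V where "V p q = (Rw 0 0 1 * p + Rw 0 1 1 * (1 - p)) + \<gamma> / (1 - \<gamma>) * (Rw 1 0 1 * q + Rw 1 1 1 * (1 - q))" for p q :: real
  have V: "V p q = V 0 0 + B * p + C * q" for p q
    unfolding V_def B_def C_def by (simp add: algebra_simps)
  have key: "p1*q1 + (1-p1)*(1-q1) = p2*q2 + (1-p2)*(1-q2)"
    if "0 \<le> p1" "p1 \<le> 1" "0 \<le> q1" "q1 \<le> 1" "0 \<le> p2" "p2 \<le> 1" "0 \<le> q2" "q2 \<le> 1"
       "V p1 q1 = V p2 q2" for p1 q1 p2 q2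
  proof -
    have "J_ONMR E0 Rw f \<gamma> (pol p1 q1) = J_ONMR E0 Rw f \<gamma> (pol p2 q2)"
      using that g by (simp add: JONMR_val V_def)
    then have "(pol p1 q1, pol p2 q2) \<in> induced_order E0 (J_ONMR E0 Rw f \<gamma>)"
      "(pol p2 q2, pol p1 q1) \<in> induced_order E0 (J_ONMR E0 Rw f \<gamma>)"
      by (auto simp: induced_order_def pol_in)
    then have "(pol p1 q1, pol p2 q2) \<in> induced_order E0 (J_RM E0 dU dR 0 (1/2))"
      "(pol p2 q2, pol p1 q1) \<in> induced_order E0 (J_RM E0 dU dR 0 (1/2))"
      using R by auto
    then show ?thesis using that by (auto simp: induced_order_def JRM_val)
  qed
  show False
  proof (cases "B = 0")
    case True
    have "V 0 0 = V 1 0" using V[of 1 0] True by simp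
    from key[OF _ _ _ _ _ _ _ _ this] show False by simp
  next
    case Bn: False
    show False
    proof (cases "C = 0")
      case True
      have "V 0 0 = V 0 1" using V[of 0 1] True by simp
      from key[OF _ _ _ _ _ _ _ _ this] show False by simp
    next
      case Cn: False
      define t where "t = 1 / (2 * (\<bar>B\<bar> + \<bar>C\<bar>))"
      have tp: "t > 0" using Bn Cn by (simp add: t_def)
      have Ct: "\<bar>C * t\<bar> \<le> 1/2" "\<bar>B * t\<bar> \<le> 1/2"
        using Bn Cn by (auto simp: t_def abs_mult field_simps)
      have "V (1/2) (1/2) = V (1/2 + C*t) (1/2 - B*t)"
        using V[of "1/2" "1/2"] V[of "1/2 + C*t" "1/2 - B*t"] by (simp add: algebra_simps)
      from key[OF _ _ _ _ _ _ _ _ this] Ct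
      have "(1/2::real) = 1/2 - 2 * (B*t) * (C*t)" by (auto simp: abs_le_iff algebra_simps)
      then have "(B*t) * (C*t) = 0" by simp
      then show False using Bn Cn tp by simp
    qed
  qed
qed

theorem mainTheorem20:
  shows "\<exists>E R. valid_env E \<and> preorder_on (policies E) R \<and> total_on (policies E) R
           \<and> R \<in> Ord_RM E \<and> R \<notin> Ord_ONMR E"
proof (intro exI conjI)
  show "valid_env E0" by (simp add: valid_env_def E0_def)
  show "preorder_on (policies E0) (induced_order E0 (J_RM E0 dU dR 0 (1/2)))"
    by (auto simp: preorder_on_def induced_order_def refl_on_def trans_def)
  show "total_on (policies E0) (induced_order E0 (J_RM E0 dU dR 0 (1/2)))"
    by (auto simp: total_on_def induced_order_def)
  show "induced_order E0 (J_RM E0 dU dR 0 (1/2)) \<in> Ord_RM E0"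
    unfolding Ord_RM_def
  proof (intro CollectI exI conjI)
    show "valid_RM E0 {0,1,2} 0 dU (1/2)" by (auto simp: valid_RM_def E0_def dU_def)
  qed (rule refl)
  show "induced_order E0 (J_RM E0 dU dR 0 (1/2)) \<notin> Ord_ONMR E0" by (rule notONMR)
qed

end
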